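(* Let $c=(c_1,\dots,c_p)$ with $c_1\ge\cdots\ge c_p>0$ and $C=\operatorname{diag}(c_1,\dots,c_p)$. If $R\in M_p$ satisfies $\|R\|_c=\operatorname{tr}(CR)$, where $\|R\|_c=\sum_{j=1}^p c_js_j(R)$, then $R$ is positive semidefinite.
   Context: $M_p$ is the set of $p\times p$ complex matrices and $s_1(R)\ge\cdots\ge s_p(R)$ are the singular values of $R$. *)

theory Defs
  imports "Jordan_Normal_Form.Schur_Decomposition" "Jordan_Normal_Form.Char_Poly"
begin

definition mat_trace :: "complex mat \<Rightarrow> complex" where
  "mat_trace A = (\<Sum>i<dim_row A. A $$ (i, i))"

(* singular values s_1(R) >= ... >= s_p(R), as a list indexed from 0:
   the square roots of the eigenvalues (with algebraic multiplicity) of R^* R,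
   sorted in non-increasing order. The eigenvalues of R^* R are real and
   nonnegative, so taking the real part loses nothing. *)
definition singular_values :: "complex mat \<Rightarrow> real list" where
  "singular_values R =
     rev (sorted_list_of_multiset
            (image_mset (\<lambda>z. sqrt (Re z)) (proots (char_poly (mat_adjoint R * R)))))"

(* c-norm: ||R||_c = sum_{j=1}^p c_j s_j(R)  (indices shifted to 0..p-1) *)
definition c_norm :: "nat \<Rightarrow> (nat \<Rightarrow> real) \<Rightarrow> complex mat \<Rightarrow> real" where
  "c_norm p c R = (\<Sum>j<p. c j * singular_values R ! j)"

definition diagC :: "nat \<Rightarrow> (nat \<Rightarrow> real) \<Rightarrow> complex mat" where
  "diagC p c = mat_diag p (\<lambda>j. complex_of_real (c j))"

definition psd_mat :: "nat \<Rightarrow> complex mat \<Rightarrow> bool" where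
  "psd_mat p R \<longleftrightarrow> R \<in> carrier_mat p p \<and> mat_adjoint R = R \<and>
     (\<forall>x \<in> carrier_vec p. Re ((R *\<^sub>v x) \<bullet>c x) \<ge> 0 \<and> Im ((R *\<^sub>v x) \<bullet>c x) = 0)"

end

theory Submission
  imports Defs
begin

lemma adj_dim[simp]: "dim_row (mat_adjoint A) = dim_col A" "dim_col (mat_adjoint A) = dim_row A"
  unfolding mat_adjoint_def by (auto simp: mat_of_rows_def)

lemma adj_index[simp]: "i < dim_col A \<Longrightarrow> j < dim_row A \<Longrightarrow> mat_adjoint A $$ (i,j) = cnj (A $$ (j,i))"
  unfolding mat_adjoint_def by (auto simp: mat_of_rows_def)

lemma adj_carrier[simp]: "A \<in> carrier_mat n m \<Longrightarrow> mat_adjoint A \<in> carrier_mat m n"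
  by (metis adj_dim carrier_matD carrier_matI)

lemma adj_adj[simp]: "mat_adjoint (mat_adjoint (A::complex mat)) = A"
  by (rule eq_matI, auto)

lemma adj_one[simp]: "mat_adjoint (1\<^sub>m n :: complex mat) = 1\<^sub>m n"
  by (rule eq_matI, auto)

lemma adj_zero[simp]: "mat_adjoint (0\<^sub>m n m :: complex mat) = 0\<^sub>m m n"
  by (rule eq_matI, auto)

lemma adj_mult: fixes A B :: "complex mat"
  assumes "A \<in> carrier_mat n m" "B \<in> carrier_mat m k"
  shows "mat_adjoint (A * B) = mat_adjoint B * mat_adjoint A"
proof (rule eq_matI)
  fix i j assume ij: "i < dim_row (mat_adjoint B * mat_adjoint A)" "j < dim_col (mat_adjoint B * mat_adjoint A)"
  hence i: "i < k" and j: "j < n" using assms by auto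
  have "mat_adjoint (A * B) $$ (i,j) = cnj (\<Sum>l<m. A $$ (j,l) * B $$ (l,i))"
    using assms i j by (simp add: scalar_prod_def atLeast0LessThan)
  also have "\<dots> = (\<Sum>l<m. cnj (B $$ (l,i)) * cnj (A $$ (j,l)))"
    by (simp add: mult.commute)
  also have "\<dots> = (mat_adjoint B * mat_adjoint A) $$ (i,j)"
    using assms i j by (simp add: scalar_prod_def atLeast0LessThan)
  finally show "mat_adjoint (A * B) $$ (i,j) = (mat_adjoint B * mat_adjoint A) $$ (i,j)" .
qed (insert assms, auto)

lemma adj_four_block: fixes A B C D :: "complex mat"
  assumes c: "A \<in> carrier_mat n1 m1" "B \<in> carrier_mat n1 m2" "C \<in> carrier_mat n2 m1" "D \<in> carrier_mat n2 m2"
  shows "mat_adjoint (four_block_mat A B C D) = four_block_mat (mat_adjoint A) (mat_adjoint C) (mat_adjoint B) (mat_adjoint D)"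
proof (rule eq_matI)
  fix i j assume "i < dim_row (four_block_mat (mat_adjoint A) (mat_adjoint C) (mat_adjoint B) (mat_adjoint D))"
     "j < dim_col (four_block_mat (mat_adjoint A) (mat_adjoint C) (mat_adjoint B) (mat_adjoint D))"
  hence i: "i < m1 + m2" and j: "j < n1 + n2" using c by auto
  have d: "dim_row A = n1" "dim_col A = m1" "dim_row D = n2" "dim_col D = m2" "dim_row B = n1" "dim_col B = m2"
     "dim_row C = n2" "dim_col C = m1" using c by auto
  show "mat_adjoint (four_block_mat A B C D) $$ (i, j) = four_block_mat (mat_adjoint A) (mat_adjoint C) (mat_adjoint B) (mat_adjoint D) $$ (i, j)"
    using i j by (cases "i < m1"; cases "j < n1"; simp add: d)
qed (insert c, auto)

lemma adjmult_index: fixes A B :: "complex mat"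
  assumes "A \<in> carrier_mat n m" "B \<in> carrier_mat n k" "i < m" "j < k"
  shows "(mat_adjoint A * B) $$ (i,j) = col B j \<bullet>c col A i"
  using assms by (auto simp: scalar_prod_def mult.commute intro!: sum.cong)

lemma adj_diag[simp]: "mat_adjoint (mat_diag n f) = mat_diag n (\<lambda>i. cnj (f i))"
  by (rule eq_matI, auto simp: mat_diag_def)

lemma smult_cscalar: fixes v w :: "complex vec"
  assumes "v \<in> carrier_vec n" "w \<in> carrier_vec n"
  shows "(a \<cdot>\<^sub>v v) \<bullet>c (b \<cdot>\<^sub>v w) = a * cnj b * (v \<bullet>c w)"
  using assms by (auto simp: scalar_prod_def sum_distrib_left intro!: sum.cong)

lemma cscalar_self: fixes v :: "complex vec"
  shows "v \<bullet>c v = complex_of_real (Re (v \<bullet>c v))" "Re (v \<bullet>c v) \<ge> 0"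
proof -
  have "v \<bullet>c v \<ge> 0" by (rule conjugate_square_ge_0_vec)
  thus "v \<bullet>c v = complex_of_real (Re (v \<bullet>c v))" "Re (v \<bullet>c v) \<ge> 0"
    by (auto simp: less_eq_complex_def complex_eq_iff)
qed

lemma cscalar_self_pos: fixes v :: "complex vec"
  assumes "v \<in> carrier_vec n" "v \<noteq> 0\<^sub>v n"
  shows "Re (v \<bullet>c v) > 0"
proof -
  have "v \<bullet>c v > 0" using assms by simp
  thus ?thesis by (auto simp: less_complex_def)
qed

definition nz :: "complex vec \<Rightarrow> complex vec" where
  "nz w = (1 / complex_of_real (sqrt (Re (w \<bullet>c w)))) \<cdot>\<^sub>v w"

lemma nz_carrier[simp]: "w \<in> carrier_vec n \<Longrightarrow> nz w \<in> carrier_vec n"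
  unfolding nz_def by simp

lemma nz_cscalar: fixes v w :: "complex vec"
  assumes "v \<in> carrier_vec n" "w \<in> carrier_vec n"
  shows "nz v \<bullet>c nz w = (1 / complex_of_real (sqrt (Re (v \<bullet>c v)))) * (1 / complex_of_real (sqrt (Re (w \<bullet>c w)))) * (v \<bullet>c w)"
  unfolding nz_def by (subst smult_cscalar[OF assms], simp)

lemma nz_self: fixes v :: "complex vec"
  assumes "v \<in> carrier_vec n" "v \<noteq> 0\<^sub>v n"
  shows "nz v \<bullet>c nz v = 1"
proof -
  define r where "r = Re (v \<bullet>c v)"
  have r: "r > 0" using cscalar_self_pos[OF assms] unfolding r_def .
  have "nz v \<bullet>c nz v = (1 / complex_of_real (sqrt r)) * (1 / complex_of_real (sqrt r)) * complex_of_real r"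
    using nz_cscalar[OF assms(1) assms(1)] cscalar_self(1)[of v] unfolding r_def by metis
  also have "\<dots> = complex_of_real ((1 / sqrt r) * (1 / sqrt r) * r)" by (simp only: of_real_mult of_real_divide of_real_1)
  also have "(1 / sqrt r) * (1 / sqrt r) * r = 1" using r
    by (simp add: field_simps) 
  finally show ?thesis by simp
qed

lemma smult_cscalar_left: fixes v w :: "complex vec"
  assumes "v \<in> carrier_vec n" "w \<in> carrier_vec n"
  shows "(a \<cdot>\<^sub>v v) \<bullet>c w = a * (v \<bullet>c w)"
  using assms by (auto simp: scalar_prod_def sum_distrib_left intro!: sum.cong)

lemma spectral:
  fixes A :: "complex mat"
  assumes "A \<in> carrier_mat n n" "mat_adjoint A = A" "char_poly A = (\<Prod>e\<leftarrow>es. [:- e, 1:])"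
  shows "\<exists>V. V \<in> carrier_mat n n \<and> mat_adjoint V * V = 1\<^sub>m n \<and> V * mat_adjoint V = 1\<^sub>m n \<and>
     mat_adjoint V * A * V = mat_diag n (\<lambda>i. es ! i)"
  using assms
proof (induct es arbitrary: n A)
  case Nil
  have "degree (char_poly A) = n" using degree_monic_char_poly[OF Nil(1)] by auto
  hence n: "n = 0" using Nil(3) by simp
  have c1: "mat_adjoint (1\<^sub>m 0) * A * 1\<^sub>m 0 \<in> carrier_mat 0 0" using Nil(1) n by simp
  have "mat_adjoint (1\<^sub>m 0) * A * 1\<^sub>m 0 = mat_diag 0 (\<lambda>i. [] ! i)"
    by (rule eq_matI, insert c1, auto simp: mat_diag_def)
  thus ?case using n by (intro exI[of _ "1\<^sub>m 0"], simp)
next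
  case (Cons e es n A)
  note A = Cons(2) and herm = Cons(3) and cp = Cons(4)
  let ?n1 = "n - 1"
  have cp': "char_poly A = [: -e, 1 :] * (\<Prod>e\<leftarrow>es. [:- e, 1:])" using cp by simp
  have mon: "monic (\<Prod>e \<leftarrow> es. [:- e, 1:])" by (rule monic_prod_list, auto)
  have deg: "degree (char_poly A) = Suc (degree (\<Prod>e\<leftarrow> es. [:- e, 1:]))" unfolding cp'
    by (subst degree_mult_eq, insert mon, auto)
  with degree_monic_char_poly[OF A] have n: "n \<noteq> 0" by auto
  have nn: "1 + ?n1 = n" using n by simp
  have e: "eigenvalue A e"
    unfolding eigenvalue_root_char_poly[OF A] cp by simp
  define v where "v = find_eigenvector A e"
  from find_eigenvector[OF A e] have ev: "eigenvector A v e" unfolding v_def .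
  from this[unfolded eigenvector_def]
  have v: "v \<in> carrier_vec n" and v0: "v \<noteq> 0\<^sub>v n" and eig: "A *\<^sub>v v = e \<cdot>\<^sub>v v" using A by auto
  interpret cof_vec_space n "TYPE(complex)" .
  define b where "b = basis_completion v"
  from basis_completion[OF v v0, folded b_def]
  have dist_b: "distinct b" 
    and indep: "\<not> lin_dep (set b)" and b: "set b \<subseteq> carrier_vec n" and hdb: "hd b = v" 
    and len_b: "length b = n" by auto
  from hdb len_b n obtain vs where bv: "b = v # vs" by (cases b, auto)
  define ws where "ws = gram_schmidt n b"
  from gram_schmidt_result[OF b dist_b indep refl, folded ws_def]
  have ws: "set ws \<subseteq> carrier_vec n" "corthogonal ws" "length ws = n" 
    by (auto simp: len_b)
  from gram_schmidt_hd[OF v, of vs, folded bv] have hdws: "hd ws = v" unfolding ws_def .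
  have ws0: "ws ! 0 = v" using hdws ws(3) n by (cases ws, auto)
  have wsc: "\<And>i. i < n \<Longrightarrow> ws ! i \<in> carrier_vec n" using ws by auto
  have wsnz: "ws ! i \<noteq> 0\<^sub>v n" if i: "i < n" for i
  proof
    assume "ws ! i = 0\<^sub>v n"
    hence "ws ! i \<bullet>c ws ! i = 0" by simp
    with corthogonalD[OF ws(2), of i i] i ws(3) show False by simp
  qed
  define us where "us = map nz ws"
  have len_us: "length us = n" using ws(3) unfolding us_def by simp
  have us: "\<And>i. i < n \<Longrightarrow> us ! i \<in> carrier_vec n" unfolding us_def using wsc ws(3) by simp
  have us_nth: "\<And>i. i < n \<Longrightarrow> us ! i = nz (ws ! i)" unfolding us_def using ws(3) by simp
  define W where "W = mat_of_cols n us"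
  have W: "W \<in> carrier_mat n n" unfolding W_def using len_us mat_of_cols_carrier(1)[of n us] by simp
  have adjW: "mat_adjoint W \<in> carrier_mat n n" using W by simp
  have colW: "\<And>j. j < n \<Longrightarrow> col W j = us ! j" unfolding W_def using len_us us by simp
  have orth: "us ! i \<bullet>c us ! j = (if i = j then 1 else 0)" if i: "i < n" and j: "j < n" for i j
  proof (cases "i = j")
    case True
    thus ?thesis using nz_self[OF wsc[OF i] wsnz[OF i]] us_nth[OF i] by simp
  next
    case False
    have "ws ! i \<bullet>c ws ! j = 0" using corthogonalD[OF ws(2), of i j] i j ws(3) False by simp
    thus ?thesis using nz_cscalar[OF wsc[OF i] wsc[OF j]] us_nth[OF i] us_nth[OF j] False by simp
  qed
  have WW: "mat_adjoint W * W = 1\<^sub>m n"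
  proof (rule eq_matI)
    fix i j assume "i < dim_row (1\<^sub>m n :: complex mat)" "j < dim_col (1\<^sub>m n :: complex mat)"
    hence i: "i < n" and j: "j < n" by auto
    show "(mat_adjoint W * W) $$ (i, j) = 1\<^sub>m n $$ (i, j)"
      using adjmult_index[OF W W i j] colW[OF i] colW[OF j] orth[OF j i] i j by auto
  qed (insert W, auto)
  have WW': "W * mat_adjoint W = 1\<^sub>m n" using mat_mult_left_right_inverse[OF adjW W WW] .
  define A' where "A' = mat_adjoint W * A * W"
  have A': "A' \<in> carrier_mat n n" unfolding A'_def using mult_carrier_mat[OF mult_carrier_mat[OF adjW A] W] .
  have A'_alt: "A' = mat_adjoint W * (A * W)" unfolding A'_def using assoc_mult_mat[OF adjW A W] .
  have hA': "mat_adjoint A' = A'"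
  proof -
    have "mat_adjoint A' = mat_adjoint (A * W) * mat_adjoint (mat_adjoint W)"
      unfolding A'_alt by (rule adj_mult[OF adjW mult_carrier_mat[OF A W]])
    also have "\<dots> = mat_adjoint W * A * W" 
      using adj_mult[OF A W] herm W A by simp
    finally show ?thesis unfolding A'_def .
  qed
  have AW0: "col (A * W) 0 = e \<cdot>\<^sub>v us ! 0"
  proof -
    have "col (A * W) 0 = A *\<^sub>v col W 0" using col_mult2[OF A W, of 0] n by simp
    also have "col W 0 = (1 / complex_of_real (sqrt (Re (v \<bullet>c v)))) \<cdot>\<^sub>v v"
      using colW[of 0] n us_nth[of 0] ws0 unfolding nz_def by simp
    also have "A *\<^sub>v \<dots> = (1 / complex_of_real (sqrt (Re (v \<bullet>c v)))) \<cdot>\<^sub>v (e \<cdot>\<^sub>v v)"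
      using mult_mat_vec[OF A v] eig by simp
    also have "\<dots> = e \<cdot>\<^sub>v ((1 / complex_of_real (sqrt (Re (v \<bullet>c v)))) \<cdot>\<^sub>v v)"
      by (simp add: smult_smult_assoc mult.commute)
    also have "(1 / complex_of_real (sqrt (Re (v \<bullet>c v)))) \<cdot>\<^sub>v v = us ! 0"
      using n us_nth[of 0] ws0 unfolding nz_def by simp
    finally show ?thesis .
  qed
  have col0: "A' $$ (i,0) = (if i = 0 then e else 0)" if i: "i < n" for i
  proof -
    have "A' $$ (i,0) = col (A * W) 0 \<bullet>c col W i"
      unfolding A'_alt by (rule adjmult_index[OF W _ i], insert A W n, auto)
    also have "\<dots> = e * (us ! 0 \<bullet>c us ! i)" unfolding AW0 colW[OF i]
      by (rule smult_cscalar_left[OF us us], insert n i, auto)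
    finally show ?thesis using orth[OF _ i] n by auto
  qed
  have row0: "A' $$ (0,j) = (if j = 0 then e else 0)" if j: "j < n" for j
  proof (cases "j = 0")
    case True thus ?thesis using col0[of 0] n by simp
  next
    case False
    have "A' $$ (0,j) = mat_adjoint A' $$ (0,j)" using hA' by simp
    also have "\<dots> = cnj (A' $$ (j,0))" using A' j n by simp
    finally show ?thesis using col0[OF j] False by simp
  qed
  obtain A1 A2 A0 A3 where splitA': "split_block A' 1 1 = (A1,A2,A0,A3)"
    by (cases "split_block A' 1 1", auto)
  from A' n have "dim_row A' = 1 + ?n1" "dim_col A' = 1 + ?n1" by auto
  from split_block[OF splitA' this] have A1: "A1 \<in> carrier_mat 1 1" and A2: "A2 \<in> carrier_mat 1 ?n1"
    and A0: "A0 \<in> carrier_mat ?n1 1" and A3: "A3 \<in> carrier_mat ?n1 ?n1" 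
    and A'block: "A' = four_block_mat A1 A2 A0 A3" by auto
  have A1id: "A1 = mat 1 1 (\<lambda> _. e)"
    using splitA'[unfolded split_block_def Let_def] col0[of 0] n by auto
  have A2id: "A2 = 0\<^sub>m 1 ?n1"
    using splitA'[unfolded split_block_def Let_def] row0 A' by auto
  have A0id: "A0 = 0\<^sub>m ?n1 1"
    using splitA'[unfolded split_block_def Let_def] col0 A' by auto
  have A3id: "A3 = mat ?n1 ?n1 (\<lambda>(i,j). A' $$ (i+1, j+1))"
    using splitA'[unfolded split_block_def Let_def] A' by auto
  have hA3: "mat_adjoint A3 = A3"
  proof (rule eq_matI)
    fix i j assume "i < dim_row A3" "j < dim_col A3"
    hence i: "i < ?n1" and j: "j < ?n1" using A3 by auto
    have "mat_adjoint A3 $$ (i,j) = cnj (A' $$ (j+1, i+1))" using i j A3id by simp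
    also have "\<dots> = mat_adjoint A' $$ (i+1, j+1)" using i j A' by simp
    also have "\<dots> = A3 $$ (i,j)" using hA' i j A3id by simp
    finally show "mat_adjoint A3 $$ (i,j) = A3 $$ (i,j)" .
  qed (insert A3, auto)
  have simw: "similar_mat_wit A' A (mat_adjoint W) W"
    unfolding similar_mat_wit_def Let_def using A' A W adjW WW WW' A'_def by auto
  hence "similar_mat A' A" unfolding similar_mat_def by blast
  from char_poly_similar[OF this] cp'
  have "char_poly A' = [: -e,1 :] * (\<Prod> e \<leftarrow> es. [:- e, 1:])" by simp
  also have "char_poly A' = char_poly A1 * char_poly A3" 
    unfolding A'block A0id
    by (rule char_poly_four_block_zeros_col[OF A1 A2 A3])
  also have "char_poly A1 = [: -e,1 :]"
    by (simp add: A1id char_poly_defs det_def sign_def)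
  finally have cp3: "char_poly A3 = (\<Prod> e \<leftarrow> es. [:- e, 1:])"
    by (metis mult_cancel_left pCons_eq_0_iff zero_neq_one)
  from Cons(1)[OF A3 hA3 cp3] obtain V3 where V3: "V3 \<in> carrier_mat ?n1 ?n1"
    and V3a: "mat_adjoint V3 * V3 = 1\<^sub>m ?n1" and V3b: "V3 * mat_adjoint V3 = 1\<^sub>m ?n1"
    and V3c: "mat_adjoint V3 * A3 * V3 = mat_diag ?n1 (\<lambda>i. es ! i)" by blast
  define Bk where "Bk = four_block_mat (1\<^sub>m 1) (0\<^sub>m 1 ?n1) (0\<^sub>m ?n1 1) V3"
  have adjV3: "mat_adjoint V3 \<in> carrier_mat ?n1 ?n1" using V3 by simp
  have adjBk: "mat_adjoint Bk = four_block_mat (1\<^sub>m 1) (0\<^sub>m 1 ?n1) (0\<^sub>m ?n1 1) (mat_adjoint V3)"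
    unfolding Bk_def by (subst adj_four_block[of _ 1 1 _ ?n1 _ ?n1 _], insert V3, auto)
  have Bk: "Bk \<in> carrier_mat n n" unfolding Bk_def using V3 nn four_block_carrier_mat[of "1\<^sub>m 1" 1 1 V3 ?n1 ?n1] by simp
  have adjBkc: "mat_adjoint Bk \<in> carrier_mat n n" using Bk by simp
  have BB: "mat_adjoint Bk * Bk = 1\<^sub>m n"
    unfolding adjBk unfolding Bk_def
    by (subst mult_four_block_mat[of _ 1 1 _ ?n1 _ ?n1 _ _ 1 _ ?n1], insert V3 adjV3 n, auto simp: V3a nn)
  have BB': "Bk * mat_adjoint Bk = 1\<^sub>m n"
    unfolding adjBk unfolding Bk_def
    by (subst mult_four_block_mat[of _ 1 1 _ ?n1 _ ?n1 _ _ 1 _ ?n1], insert V3 adjV3 n, auto simp: V3b nn)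
  have BAB: "mat_adjoint Bk * A' * Bk = mat_diag n (\<lambda>i. (e # es) ! i)"
  proof -
    have "mat_adjoint Bk * A' = four_block_mat A1 (0\<^sub>m 1 ?n1) (0\<^sub>m ?n1 1) (mat_adjoint V3 * A3)"
      unfolding adjBk A'block A2id A0id
      by (subst mult_four_block_mat[of _ 1 1 _ ?n1 _ ?n1 _ _ 1 _ ?n1], insert V3 adjV3 A1 A3, auto)
    also have "\<dots> * Bk = four_block_mat A1 (0\<^sub>m 1 ?n1) (0\<^sub>m ?n1 1) (mat_adjoint V3 * A3 * V3)"
      unfolding Bk_def
      by (subst mult_four_block_mat[of _ 1 1 _ ?n1 _ ?n1 _ _ 1 _ ?n1], insert V3 adjV3 A1 A3, auto)
    also have "\<dots> = mat_diag n (\<lambda>i. (e # es) ! i)" unfolding V3c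
    proof (rule eq_matI)
      fix i j assume "i < dim_row (mat_diag n (\<lambda>i. (e # es) ! i))" "j < dim_col (mat_diag n (\<lambda>i. (e # es) ! i))"
      hence i: "i < 1 + ?n1" and j: "j < 1 + ?n1" using nn by (auto simp: mat_diag_def)
      show "four_block_mat A1 (0\<^sub>m 1 ?n1) (0\<^sub>m ?n1 1) (mat_diag ?n1 (\<lambda>i. es ! i)) $$ (i, j) = mat_diag n (\<lambda>i. (e # es) ! i) $$ (i, j)"
        using i j A1 nn by (cases "i = 0"; cases "j = 0"; auto simp: A1id mat_diag_def nth_Cons')
    qed (insert A1 nn, auto simp: mat_diag_def)
    finally show ?thesis .
  qed
  define V where "V = W * Bk"
  have V: "V \<in> carrier_mat n n" unfolding V_def using W Bk by simp
  have adjV: "mat_adjoint V = mat_adjoint Bk * mat_adjoint W" unfolding V_def by (rule adj_mult[OF W Bk])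
  have WB: "W * Bk \<in> carrier_mat n n" using W Bk by simp
  have BW: "mat_adjoint Bk * mat_adjoint W \<in> carrier_mat n n" using adjBkc adjW by simp
  have "mat_adjoint V * V = mat_adjoint Bk * mat_adjoint W * (W * Bk)"
    unfolding adjV unfolding V_def ..
  also have "\<dots> = mat_adjoint Bk * (mat_adjoint W * (W * Bk))"
    using assoc_mult_mat[OF adjBkc adjW WB] .
  also have "mat_adjoint W * (W * Bk) = (mat_adjoint W * W) * Bk"
    using assoc_mult_mat[OF adjW W Bk] by simp
  also have "mat_adjoint Bk * ((mat_adjoint W * W) * Bk) = 1\<^sub>m n" using WW BB Bk by simp
  finally have VV: "mat_adjoint V * V = 1\<^sub>m n" .
  have "V * mat_adjoint V = W * Bk * (mat_adjoint Bk * mat_adjoint W)"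
    unfolding adjV unfolding V_def ..
  also have "\<dots> = W * (Bk * (mat_adjoint Bk * mat_adjoint W))"
    using assoc_mult_mat[OF W Bk BW] .
  also have "Bk * (mat_adjoint Bk * mat_adjoint W) = (Bk * mat_adjoint Bk) * mat_adjoint W"
    using assoc_mult_mat[OF Bk adjBkc adjW] by simp
  also have "W * ((Bk * mat_adjoint Bk) * mat_adjoint W) = 1\<^sub>m n" using WW' BB' left_mult_one_mat[OF adjW] by simp
  finally have VV': "V * mat_adjoint V = 1\<^sub>m n" .
  have "mat_adjoint V * A * V = mat_adjoint Bk * mat_adjoint W * A * (W * Bk)"
    unfolding adjV unfolding V_def ..
  also have "\<dots> = mat_adjoint Bk * (mat_adjoint W * A * W) * Bk"
  proof -
    have c1: "mat_adjoint W * A \<in> carrier_mat n n" using adjW A by simp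
    have "mat_adjoint Bk * mat_adjoint W * A = mat_adjoint Bk * (mat_adjoint W * A)"
      using assoc_mult_mat[OF adjBkc adjW A] .
    moreover have "mat_adjoint Bk * (mat_adjoint W * A) * (W * Bk) = mat_adjoint Bk * ((mat_adjoint W * A) * (W * Bk))"
      using assoc_mult_mat[OF adjBkc c1 WB] .
    moreover have "(mat_adjoint W * A) * (W * Bk) = (mat_adjoint W * A * W) * Bk"
      using assoc_mult_mat[OF c1 W Bk] by simp
    moreover have "mat_adjoint Bk * ((mat_adjoint W * A * W) * Bk) = mat_adjoint Bk * (mat_adjoint W * A * W) * Bk"
      using assoc_mult_mat[OF adjBkc mult_carrier_mat[OF c1 W] Bk] by simp
    ultimately show ?thesis by simp
  qed
  also have "\<dots> = mat_diag n (\<lambda>i. (e # es) ! i)" using BAB unfolding A'_def .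
  finally show ?case using V VV VV' by blast
qed

lemma abel_ineq:
  fixes c x :: "nat \<Rightarrow> real"
  assumes dec: "\<And>i j. i \<le> j \<Longrightarrow> j < p \<Longrightarrow> c j \<le> c i"
    and ps: "\<And>n. n \<le> p \<Longrightarrow> (\<Sum>i<n. x i) \<ge> 0"
  shows "0 < n \<Longrightarrow> n \<le> p \<Longrightarrow> (\<Sum>i<n. c i * x i) \<ge> c (n - 1) * (\<Sum>i<n. x i)"
proof (induct n)
  case 0 thus ?case by simp
next
  case (Suc n)
  show ?case
  proof (cases "n = 0")
    case True thus ?thesis by simp
  next
    case False
    have IH: "(\<Sum>i<n. c i * x i) \<ge> c (n - 1) * (\<Sum>i<n. x i)" using Suc False by simp
    have cd: "c n \<le> c (n - 1)" using dec[of "n - 1" n] Suc(3) by simp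
    have X: "(\<Sum>i<n. x i) \<ge> 0" using ps[of n] Suc(3) by simp
    have "c n * (\<Sum>i<Suc n. x i) = c n * (\<Sum>i<n. x i) + c n * x n" by (simp add: algebra_simps)
    also have "c n * (\<Sum>i<n. x i) \<le> c (n - 1) * (\<Sum>i<n. x i)" using mult_right_mono[OF cd X] .
    finally have "c n * (\<Sum>i<Suc n. x i) \<le> c (n - 1) * (\<Sum>i<n. x i) + c n * x n" by simp
    also have "\<dots> \<le> (\<Sum>i<n. c i * x i) + c n * x n" using IH by simp
    also have "\<dots> = (\<Sum>i<Suc n. c i * x i)" by simp
    finally show ?thesis by simp
  qed
qed

lemma sum_list_perm_map:
  fixes f :: "real \<Rightarrow> real"
  assumes "mset ys = mset xs"
  shows "(\<Sum>i<length ys. f (ys ! i)) = (\<Sum>i<length xs. f (xs ! i))"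
proof -
  have "(\<Sum>i<length ys. f (ys ! i)) = sum_list (map f ys)"
    by (simp add: sum_list_sum_nth atLeast0LessThan)
  also have "\<dots> = sum_list (map f xs)" using assms by (metis mset_map sum_mset_sum_list)
  also have "\<dots> = (\<Sum>i<length xs. f (xs ! i))"
    by (simp add: sum_list_sum_nth atLeast0LessThan)
  finally show ?thesis .
qed

lemma rev_sort_mono:
  fixes xs :: "real list"
  assumes "i \<le> j" "j < length xs"
  shows "rev (sort xs) ! j \<le> rev (sort xs) ! i"
proof -
  have "sorted (sort xs)" by simp
  moreover have "length (sort xs) = length xs" by simp
  ultimately show ?thesis using assms
    by (simp add: rev_nth sorted_nth_mono)
qed

lemma topk:
  fixes xs :: "real list" and a :: "nat \<Rightarrow> real"
  assumes nn: "\<And>x. x \<in> set xs \<Longrightarrow> x \<ge> 0"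
    and a01: "\<And>j. j < length xs \<Longrightarrow> 0 \<le> a j \<and> a j \<le> 1"
    and asum: "(\<Sum>j<length xs. a j) \<le> real k"
    and k: "k \<le> length xs"
  shows "(\<Sum>j<length xs. xs ! j * a j) \<le> (\<Sum>i<k. rev (sort xs) ! i)"
proof (cases "k = 0")
  case True
  have "(\<Sum>j<length xs. a j) \<ge> 0" by (rule sum_nonneg, insert a01, simp)
  hence s0: "(\<Sum>j<length xs. a j) = 0" using asum True by simp
  have "\<forall>j\<in>{..<length xs}. a j = 0"
    using sum_nonneg_eq_0_iff[of "{..<length xs}" a] s0 a01 by auto
  thus ?thesis using True by simp
next
  case False
  define s where "s = rev (sort xs)"
  have ls: "length s = length xs" unfolding s_def by simp
  have ms: "mset s = mset xs" unfolding s_def by simp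
  define t where "t = s ! (k - 1)"
  have "k - 1 < length s" using k ls False by simp
  hence "s ! (k - 1) \<in> set s" by (rule nth_mem)
  hence "s ! (k - 1) \<in> set xs" using mset_eq_setD[OF ms] by simp
  hence t0: "t \<ge> 0" unfolding t_def using nn by simp
  define f where "f = (\<lambda>y. max (y - t) 0 :: real)"
  have "(\<Sum>j<length xs. xs ! j * a j) \<le> (\<Sum>j<length xs. f (xs ! j) + t * a j)"
  proof (rule sum_mono)
    fix j assume "j \<in> {..<length xs}"
    hence a: "0 \<le> a j" "a j \<le> 1" using a01 by auto
    show "xs ! j * a j \<le> f (xs ! j) + t * a j"
    proof (cases "xs ! j \<ge> t")
      case True
      have "xs ! j * a j = (xs ! j - t) * a j + t * a j" by (simp add: algebra_simps)
      also have "(xs ! j - t) * a j \<le> (xs ! j - t)" using mult_left_le[of "a j" "xs ! j - t"] True a by simp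
      finally show ?thesis unfolding f_def by simp
    next
      case False
      have "xs ! j * a j \<le> t * a j" using False a by (simp add: mult_right_mono)
      thus ?thesis unfolding f_def by simp
    qed
  qed
  also have "\<dots> = (\<Sum>j<length xs. f (xs ! j)) + t * (\<Sum>j<length xs. a j)"
    by (simp add: sum.distrib sum_distrib_left)
  also have "\<dots> \<le> (\<Sum>j<length xs. f (xs ! j)) + t * real k"
    using mult_left_mono[OF asum t0] by simp
  also have "(\<Sum>j<length xs. f (xs ! j)) = (\<Sum>i<length s. f (s ! i))"
    using sum_list_perm_map[OF ms] by simp
  also have "\<dots> = (\<Sum>i<k. f (s ! i)) + (\<Sum>i\<in>{k..<length s}. f (s ! i))"
  proof -
    have u: "{..<length s} = {..<k} \<union> {k..<length s}" using k ls by auto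
    show ?thesis unfolding u by (rule sum.union_disjoint, auto)
  qed
  also have "(\<Sum>i\<in>{k..<length s}. f (s ! i)) = 0"
  proof (rule sum.neutral, intro ballI)
    fix i assume "i \<in> {k..<length s}"
    hence "k - 1 \<le> i" "i < length xs" using ls by auto
    hence "s ! i \<le> t" unfolding t_def s_def by (rule rev_sort_mono)
    thus "f (s ! i) = 0" unfolding f_def by simp
  qed
  also have "(\<Sum>i<k. f (s ! i)) = (\<Sum>i<k. s ! i - t)"
  proof (rule sum.cong[OF refl])
    fix i assume "i \<in> {..<k}"
    hence "i \<le> k - 1" "k - 1 < length xs" using k False by auto
    hence "s ! i \<ge> t" unfolding t_def s_def by (rule rev_sort_mono)
    thus "f (s ! i) = s ! i - t" unfolding f_def by simp
  qed
  also have "(\<Sum>i<k. s ! i - t) + 0 + t * real k = (\<Sum>i<k. s ! i)"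
    by (simp add: sum_subtractf)
  finally show ?thesis unfolding s_def .
qed

lemma bessel_aux: fixes U E :: "complex mat"
  assumes U: "U \<in> carrier_mat p p" and UU: "mat_adjoint U * U = E" and E: "E \<in> carrier_mat p p"
    and UE: "U * E = U" and i: "i < p"
  shows "(\<Sum>j<p. (cmod (U $$ (i,j)))^2) \<le> 1"
proof -
  have adjU: "mat_adjoint U \<in> carrier_mat p p" using U by simp
  define Q where "Q = U * mat_adjoint U"
  have Q: "Q \<in> carrier_mat p p" unfolding Q_def using mult_carrier_mat[OF U adjU] .
  have hQ: "mat_adjoint Q = Q" unfolding Q_def using adj_mult[OF U adjU] by simp
  have QQ: "Q * Q = Q"
  proof -
    have "Q * Q = U * (mat_adjoint U * (U * mat_adjoint U))"
      unfolding Q_def using assoc_mult_mat[OF U adjU mult_carrier_mat[OF U adjU]] .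
    also have "mat_adjoint U * (U * mat_adjoint U) = E * mat_adjoint U"
      using assoc_mult_mat[OF adjU U adjU] UU by simp
    also have "U * (E * mat_adjoint U) = U * mat_adjoint U"
      using assoc_mult_mat[OF U E adjU] UE by simp
    finally show ?thesis unfolding Q_def .
  qed
  define r where "r = (\<Sum>j<p. (cmod (U $$ (i,j)))^2)"
  have r0: "r \<ge> 0" unfolding r_def by (simp add: sum_nonneg)
  have Qii: "Q $$ (i,i) = complex_of_real r"
  proof -
    have "Q $$ (i,i) = (\<Sum>j<p. U $$ (i,j) * cnj (U $$ (i,j)))"
      unfolding Q_def using U i by (simp add: scalar_prod_def atLeast0LessThan)
    also have "\<dots> = (\<Sum>j<p. complex_of_real ((cmod (U $$ (i,j)))^2))"
      by (intro sum.cong refl) (metis complex_norm_square)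
    also have "\<dots> = complex_of_real r" unfolding r_def by (simp only: of_real_sum)
    finally show ?thesis .
  qed
  have "Q $$ (i,i) = (Q * Q) $$ (i,i)" using QQ by simp
  also have "\<dots> = (\<Sum>l<p. Q $$ (i,l) * Q $$ (l,i))"
    using Q i by (simp add: scalar_prod_def atLeast0LessThan)
  also have "\<dots> = (\<Sum>l<p. Q $$ (i,l) * cnj (Q $$ (i,l)))"
  proof (rule sum.cong[OF refl])
    fix l assume "l \<in> {..<p}"
    hence l: "l < p" by simp
    have "Q $$ (l,i) = mat_adjoint Q $$ (l,i)" using hQ by simp
    also have "\<dots> = cnj (Q $$ (i,l))" using Q l i by simp
    finally show "Q $$ (i,l) * Q $$ (l,i) = Q $$ (i,l) * cnj (Q $$ (i,l))" by simp
  qed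
  also have "\<dots> = (\<Sum>l<p. complex_of_real ((cmod (Q $$ (i,l)))^2))"
    by (intro sum.cong refl) (metis complex_norm_square)
  also have "\<dots> = complex_of_real (\<Sum>l<p. (cmod (Q $$ (i,l)))^2)" by (simp only: of_real_sum)
  finally have X: "Q $$ (i,i) = complex_of_real (\<Sum>l<p. (cmod (Q $$ (i,l)))^2)" .
  hence "complex_of_real r = complex_of_real (\<Sum>l<p. (cmod (Q $$ (i,l)))^2)" unfolding Qii .
  hence "r = (\<Sum>l<p. (cmod (Q $$ (i,l)))^2)" by (simp only: of_real_eq_iff)
  moreover have "(cmod (Q $$ (i,i)))^2 \<le> (\<Sum>l<p. (cmod (Q $$ (i,l)))^2)"
    by (rule member_le_sum[of i "{..<p}" "\<lambda>l. (cmod (Q $$ (i,l)))^2"], insert i, auto)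
  moreover have "cmod (Q $$ (i,i)) = r" using Qii r0 by simp
  ultimately have "r^2 \<le> r" by simp
  have "r \<le> 1"
  proof (rule ccontr)
    assume "\<not> r \<le> 1"
    hence "r * 1 < r * r" by (intro mult_strict_left_mono) auto
    thus False using \<open>r^2 \<le> r\<close> by (simp add: power2_eq_square)
  qed
  thus ?thesis unfolding r_def .
qed

lemma cscalar_self_sum: fixes v :: "complex vec"
  shows "v \<bullet>c v = complex_of_real (\<Sum>i<dim_vec v. (cmod (v $ i))^2)"
proof -
  have "v \<bullet>c v = (\<Sum>i<dim_vec v. v $ i * cnj (v $ i))"
    by (simp add: scalar_prod_def atLeast0LessThan)
  also have "\<dots> = (\<Sum>i<dim_vec v. complex_of_real ((cmod (v $ i))^2))"
    by (intro sum.cong refl) (metis complex_norm_square)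
  finally show ?thesis by simp
qed

lemma proots_lin: "proots (\<Prod>e\<leftarrow>es. [:- e, 1:]) = mset (es :: complex list)"
proof (induct es)
  case Nil thus ?case by simp
next
  case (Cons e es)
  have ne: "(\<Prod>e\<leftarrow>es. [:- e, 1:]) \<noteq> 0"
    using monic_prod_list[of "map (\<lambda>e. [:- e, 1:]) es"] by auto
  have "proots (\<Prod>e\<leftarrow>e # es. [:- e, 1:]) = proots ([:- e, 1:] * (\<Prod>e\<leftarrow>es. [:- e, 1:]))" by simp
  also have "\<dots> = proots [:- e, 1:] + proots (\<Prod>e\<leftarrow>es. [:- e, 1:])"
    by (rule proots_mult, simp, rule ne)
  finally show ?case using Cons by simp
qed

lemma adj_cscalar: fixes M :: "complex mat"
  assumes M: "M \<in> carrier_mat n m" and u: "u \<in> carrier_vec m" and x: "x \<in> carrier_vec n"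
  shows "(M *\<^sub>v u) \<bullet>c x = u \<bullet>c (mat_adjoint M *\<^sub>v x)"
proof -
  have "(M *\<^sub>v u) \<bullet>c x = (\<Sum>i<n. (\<Sum>l<m. M $$ (i,l) * u $ l) * cnj (x $ i))"
    using M u x by (simp add: scalar_prod_def atLeast0LessThan)
  also have "\<dots> = (\<Sum>i<n. \<Sum>l<m. M $$ (i,l) * u $ l * cnj (x $ i))"
    by (simp add: sum_distrib_right)
  also have "\<dots> = (\<Sum>l<m. \<Sum>i<n. M $$ (i,l) * u $ l * cnj (x $ i))"
    by (rule sum.swap)
  also have "\<dots> = (\<Sum>l<m. u $ l * cnj (\<Sum>i<n. cnj (M $$ (i,l)) * x $ i))"
    by (simp add: sum_distrib_left mult.commute mult.left_commute)
  also have "\<dots> = u \<bullet>c (mat_adjoint M *\<^sub>v x)"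
    using M u x by (simp add: scalar_prod_def atLeast0LessThan)
  finally show ?thesis .
qed

lemma entry_ineq: fixes x y s :: real
  assumes "x \<ge> 0" "y \<ge> 0" "s \<ge> 0" "s = 0 \<Longrightarrow> x = 0"
  shows "x * y \<le> s * ((x^2 / s^2 + y^2) / 2)"
proof (cases "s = 0")
  case True thus ?thesis using assms by simp
next
  case False
  hence s: "s > 0" using assms by simp
  have "0 \<le> (x - s * y)^2" by simp
  hence "2 * s * (x * y) \<le> x^2 + s^2 * y^2" by (simp add: power2_eq_square algebra_simps)
  hence "x * y \<le> (x^2 + s^2 * y^2) / (2 * s)" using s by (simp add: field_simps)
  also have "\<dots> = s * ((x^2 / s^2 + y^2) / 2)" using s by (simp add: field_simps power2_eq_square)
  finally show ?thesis .
qed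

lemma cmod_diff_sq: fixes a b :: complex and r :: real
  shows "(cmod (a - complex_of_real r * b))^2 = (cmod a)^2 - 2 * r * Re (a * cnj b) + r^2 * (cmod b)^2"
  by (simp only: cmod_power2) (simp add: power2_eq_square algebra_simps)

lemma re_le_cmod_prod: fixes a b :: complex
  shows "Re (a * cnj b) \<le> cmod a * cmod b"
proof -
  have "Re (a * cnj b) \<le> cmod (a * cnj b)" by (rule complex_Re_le_cmod)
  thus ?thesis by (simp add: norm_mult)
qed

theorem lemma3p3:
  fixes p :: nat and c :: "nat \<Rightarrow> real" and R :: "complex mat"
  assumes "\<And>i j. i \<le> j \<Longrightarrow> j < p \<Longrightarrow> c j \<le> c i"
    and "\<And>j. j < p \<Longrightarrow> c j > 0"
    and "R \<in> carrier_mat p p"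
    and "complex_of_real (c_norm p c R) = mat_trace (diagC p c * R)"
  shows "psd_mat p R"
proof -
  note cdec = assms(1) and cpos = assms(2) and R = assms(3) and eq = assms(4)
  define A where "A = mat_adjoint R * R"
  have adjR: "mat_adjoint R \<in> carrier_mat p p" using R by simp
  have A: "A \<in> carrier_mat p p" unfolding A_def using mult_carrier_mat[OF adjR R] .
  have hA: "mat_adjoint A = A" unfolding A_def using adj_mult[OF adjR R] by simp
  obtain es where cpA: "char_poly A = (\<Prod>a\<leftarrow>es. [:- a, 1:])" and les: "length es = p"
    using char_poly_factorized[OF A] by blast
  obtain V where V: "V \<in> carrier_mat p p" and VV: "mat_adjoint V * V = 1\<^sub>m p"
    and VV': "V * mat_adjoint V = 1\<^sub>m p" and VAV: "mat_adjoint V * A * V = mat_diag p (\<lambda>i. es ! i)"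
    using spectral[OF A hA cpA] by blast
  have adjV: "mat_adjoint V \<in> carrier_mat p p" using V by simp
  define W where "W = R * V"
  have W: "W \<in> carrier_mat p p" unfolding W_def using mult_carrier_mat[OF R V] .
  have WW: "mat_adjoint W * W = mat_diag p (\<lambda>i. es ! i)"
  proof -
    have "mat_adjoint W = mat_adjoint V * mat_adjoint R" unfolding W_def by (rule adj_mult[OF R V])
    hence "mat_adjoint W * W = mat_adjoint V * mat_adjoint R * (R * V)" unfolding W_def by simp
    also have "\<dots> = mat_adjoint V * (mat_adjoint R * (R * V))"
      using assoc_mult_mat[OF adjV adjR mult_carrier_mat[OF R V]] .
    also have "mat_adjoint R * (R * V) = A * V" unfolding A_def using assoc_mult_mat[OF adjR R V] by simp
    also have "mat_adjoint V * (A * V) = mat_adjoint V * A * V" using assoc_mult_mat[OF adjV A V] by simp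
    finally show ?thesis using VAV by simp
  qed
  have RWV: "R = W * mat_adjoint V"
  proof -
    have "W * mat_adjoint V = R * (V * mat_adjoint V)" unfolding W_def using assoc_mult_mat[OF R V adjV] .
    thus ?thesis using VV' R by simp
  qed
  define sgs where "sgs = map (\<lambda>z. sqrt (Re z)) es"
  define sg where "sg j = sgs ! j" for j
  have lsg: "length sgs = p" unfolding sgs_def using les by simp
  have colW: "(\<Sum>i<p. (cmod (W $$ (i,j)))^2) = (sg j)^2 \<and> es ! j = complex_of_real ((sg j)^2) \<and> sg j \<ge> 0"
    if j: "j < p" for j
  proof -
    define S where "S = (\<Sum>i<p. (cmod (W $$ (i,j)))^2)"
    have S0: "S \<ge> 0" unfolding S_def by (simp add: sum_nonneg)
    have "es ! j = (mat_adjoint W * W) $$ (j,j)" using WW j by (simp add: mat_diag_def)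
    also have "\<dots> = col W j \<bullet>c col W j" by (rule adjmult_index[OF W W j j])
    also have "\<dots> = complex_of_real S" unfolding cscalar_self_sum S_def using W j by simp
    finally have esj: "es ! j = complex_of_real S" .
    have sgj: "sg j = sqrt S" unfolding sg_def sgs_def using j les esj by simp
    show ?thesis using esj sgj S0 unfolding S_def by simp
  qed
  have sgnn: "\<And>j. j < p \<Longrightarrow> sg j \<ge> 0" using colW by blast
  have colV: "(\<Sum>i<p. (cmod (V $$ (i,j)))^2) = 1" if j: "j < p" for j
  proof -
    have "1 = (mat_adjoint V * V) $$ (j,j)" using VV j by simp
    also have "\<dots> = col V j \<bullet>c col V j" by (rule adjmult_index[OF V V j j])
    also have "\<dots> = complex_of_real (\<Sum>i<p. (cmod (V $$ (i,j)))^2)" unfolding cscalar_self_sum using V j by simp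
    finally show ?thesis by (metis of_real_eq_1_iff)
  qed
  have rowV: "(\<Sum>j<p. (cmod (V $$ (i,j)))^2) = 1" if i: "i < p" for i
  proof -
    have "1 = (V * mat_adjoint V) $$ (i,i)" using VV' i by simp
    also have "\<dots> = (\<Sum>j<p. V $$ (i,j) * cnj (V $$ (i,j)))"
      using V i by (simp add: scalar_prod_def atLeast0LessThan)
    also have "\<dots> = (\<Sum>j<p. complex_of_real ((cmod (V $$ (i,j)))^2))"
      by (intro sum.cong refl) (metis complex_norm_square)
    also have "\<dots> = complex_of_real (\<Sum>j<p. (cmod (V $$ (i,j)))^2)"
      by (simp only: of_real_sum)
    finally show ?thesis by (metis of_real_eq_1_iff)
  qed
  have sg0: "W $$ (i,j) = 0" if i: "i < p" and j: "j < p" and s: "sg j = 0" for i j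
  proof -
    have "(\<Sum>i<p. (cmod (W $$ (i,j)))^2) = 0" using colW[OF j] s by simp
    hence "\<forall>i\<in>{..<p}. (cmod (W $$ (i,j)))^2 = 0" by (subst sum_nonneg_eq_0_iff[symmetric], auto)
    thus ?thesis using i by simp
  qed
  have Rdec: "R $$ (i,i) = (\<Sum>j<p. W $$ (i,j) * cnj (V $$ (i,j)))" if i: "i < p" for i
  proof -
    have "R $$ (i,i) = (W * mat_adjoint V) $$ (i,i)" using RWV by simp
    also have "\<dots> = (\<Sum>j<p. W $$ (i,j) * cnj (V $$ (i,j)))"
      using V W i by (simp add: scalar_prod_def atLeast0LessThan)
    finally show ?thesis .
  qed
  have Bessel: "(\<Sum>j<p. (cmod (W $$ (i,j)))^2 / (sg j)^2) \<le> 1" if i: "i < p" for i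
  proof -
    define Dp where "Dp = mat_diag p (\<lambda>j. complex_of_real (1 / sg j))"
    have Dp: "Dp \<in> carrier_mat p p" unfolding Dp_def by simp
    have adjDp: "mat_adjoint Dp = Dp" unfolding Dp_def by simp
    define U where "U = W * Dp"
    have U: "U \<in> carrier_mat p p" unfolding U_def using mult_carrier_mat[OF W Dp] .
    have Uij: "U $$ (i,j) = W $$ (i,j) * complex_of_real (1 / sg j)" if "i < p" "j < p" for i j
      unfolding U_def Dp_def using mat_diag_mult_right[OF W] that by simp
    define E where "E = mat_diag p (\<lambda>j. complex_of_real (1 / sg j) * (es ! j * complex_of_real (1 / sg j)))"
    have E: "E \<in> carrier_mat p p" unfolding E_def by simp
    have adjW: "mat_adjoint W \<in> carrier_mat p p" using W by simp
    have UU: "mat_adjoint U * U = E"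
    proof -
      have "mat_adjoint U = Dp * mat_adjoint W" unfolding U_def using adj_mult[OF W Dp] adjDp by simp
      hence "mat_adjoint U * U = Dp * mat_adjoint W * (W * Dp)" unfolding U_def by simp
      also have "\<dots> = Dp * (mat_adjoint W * (W * Dp))" using assoc_mult_mat[OF Dp adjW mult_carrier_mat[OF W Dp]] .
      also have "mat_adjoint W * (W * Dp) = (mat_adjoint W * W) * Dp" using assoc_mult_mat[OF adjW W Dp] by simp
      also have "Dp * ((mat_adjoint W * W) * Dp) = E" unfolding WW unfolding Dp_def E_def by simp
      finally show ?thesis .
    qed
    have UE: "U * E = U"
    proof -
      have "U * E = mat p p (\<lambda>(i,j). U $$ (i,j) * (complex_of_real (1 / sg j) * (es ! j * complex_of_real (1 / sg j))))"
        unfolding E_def by (rule mat_diag_mult_right[OF U])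
      also have "\<dots> = U"
      proof (rule eq_matI)
        fix i j assume "i < dim_row U" "j < dim_col U"
        hence i: "i < p" and j: "j < p" using U by auto
        show "mat p p (\<lambda>(i,j). U $$ (i,j) * (complex_of_real (1 / sg j) * (es ! j * complex_of_real (1 / sg j)))) $$ (i,j) = U $$ (i,j)"
        proof (cases "sg j = 0")
          case True thus ?thesis using Uij[OF i j] i j by simp
        next
          case False
          have "complex_of_real (1 / sg j) * (es ! j * complex_of_real (1 / sg j)) = complex_of_real ((1 / sg j) * ((sg j)^2 * (1 / sg j)))"
            using colW[OF j] by simp
          also have "(1 / sg j) * ((sg j)^2 * (1 / sg j)) = 1" using False by (simp add: power2_eq_square)
          finally show ?thesis using i j by simp
        qed
      qed (insert U, auto)
      finally show ?thesis .
    qed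
    have "(\<Sum>j<p. (cmod (U $$ (i,j)))^2) \<le> 1" by (rule bessel_aux[OF U UU E UE i])
    moreover have "(\<Sum>j<p. (cmod (U $$ (i,j)))^2) = (\<Sum>j<p. (cmod (W $$ (i,j)))^2 / (sg j)^2)"
    proof (rule sum.cong[OF refl])
      fix j assume "j \<in> {..<p}"
      hence j: "j < p" by simp
      show "(cmod (U $$ (i,j)))^2 = (cmod (W $$ (i,j)))^2 / (sg j)^2"
        unfolding Uij[OF i j] by (simp add: norm_mult power_mult_distrib power2_abs power_one_over divide_inverse norm_inverse power_inverse)
    qed
    ultimately show ?thesis by simp
  qed
  define t where "t k j = Re (\<Sum>i<k. W $$ (i,j) * cnj (V $$ (i,j)))" for k j
  define a where "a k j = ((\<Sum>i<k. (cmod (W $$ (i,j)))^2) / (sg j)^2 + (\<Sum>i<k. (cmod (V $$ (i,j)))^2)) / 2" for k j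
  have tle: "t k j \<le> sg j * a k j" if k: "k \<le> p" and j: "j < p" for k j
  proof -
    have "t k j = (\<Sum>i<k. Re (W $$ (i,j) * cnj (V $$ (i,j))))" unfolding t_def by (simp add: Re_sum)
    also have "\<dots> \<le> (\<Sum>i<k. cmod (W $$ (i,j)) * cmod (V $$ (i,j)))"
      by (rule sum_mono, rule re_le_cmod_prod)
    also have "\<dots> \<le> (\<Sum>i<k. sg j * (((cmod (W $$ (i,j)))^2 / (sg j)^2 + (cmod (V $$ (i,j)))^2) / 2))"
    proof (rule sum_mono)
      fix i assume "i \<in> {..<k}"
      hence i: "i < p" using k by simp
      show "cmod (W $$ (i,j)) * cmod (V $$ (i,j)) \<le> sg j * (((cmod (W $$ (i,j)))^2 / (sg j)^2 + (cmod (V $$ (i,j)))^2) / 2)"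
        by (rule entry_ineq, insert sgnn[OF j] sg0[OF i j], auto)
    qed
    also have "\<dots> = sg j * a k j" unfolding a_def
      by (simp add: sum_distrib_left[symmetric] sum.distrib sum_divide_distrib[symmetric])
    finally show ?thesis .
  qed
  have a01: "0 \<le> a k j \<and> a k j \<le> 1" if k: "k \<le> p" and j: "j < p" for k j
  proof -
    have sub: "{..<k} \<subseteq> {..<p}" using k by auto
    have w1: "(\<Sum>i<k. (cmod (W $$ (i,j)))^2) \<le> (sg j)^2"
      using sum_mono2[OF _ sub, of "\<lambda>i. (cmod (W $$ (i,j)))^2"] colW[OF j] by simp
    have w2: "(\<Sum>i<k. (cmod (W $$ (i,j)))^2) / (sg j)^2 \<le> 1"
    proof (cases "sg j = 0")
      case True thus ?thesis by simp
    next
      case False thus ?thesis using w1 by (simp add: divide_le_eq_1)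
    qed
    have v1: "(\<Sum>i<k. (cmod (V $$ (i,j)))^2) \<le> 1"
      using sum_mono2[OF _ sub, of "\<lambda>i. (cmod (V $$ (i,j)))^2"] colV[OF j] by simp
    have "0 \<le> (\<Sum>i<k. (cmod (W $$ (i,j)))^2) / (sg j)^2" by (simp add: sum_nonneg)
    moreover have "0 \<le> (\<Sum>i<k. (cmod (V $$ (i,j)))^2)" by (simp add: sum_nonneg)
    ultimately show ?thesis using w2 v1 unfolding a_def by simp
  qed
  have asum: "(\<Sum>j<p. a k j) \<le> real k" if k: "k \<le> p" for k
  proof -
    have "(\<Sum>j<p. a k j) = ((\<Sum>i<k. \<Sum>j<p. (cmod (W $$ (i,j)))^2 / (sg j)^2) + (\<Sum>i<k. \<Sum>j<p. (cmod (V $$ (i,j)))^2)) / 2"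
    proof -
      have e1: "(\<Sum>j<p. a k j) = ((\<Sum>j<p. (\<Sum>i<k. (cmod (W $$ (i,j)))^2) / (sg j)^2) + (\<Sum>j<p. \<Sum>i<k. (cmod (V $$ (i,j)))^2)) / 2"
        unfolding a_def by (simp add: sum.distrib sum_divide_distrib[symmetric])
      have e2: "(\<Sum>j<p. (\<Sum>i<k. (cmod (W $$ (i,j)))^2) / (sg j)^2) = (\<Sum>j<p. \<Sum>i<k. (cmod (W $$ (i,j)))^2 / (sg j)^2)"
        by (simp only: sum_divide_distrib)
      have e3: "(\<Sum>j<p. \<Sum>i<k. (cmod (W $$ (i,j)))^2 / (sg j)^2) = (\<Sum>i<k. \<Sum>j<p. (cmod (W $$ (i,j)))^2 / (sg j)^2)"
        by (rule sum.swap)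
      have e4: "(\<Sum>j<p. \<Sum>i<k. (cmod (V $$ (i,j)))^2) = (\<Sum>i<k. \<Sum>j<p. (cmod (V $$ (i,j)))^2)"
        by (rule sum.swap)
      show ?thesis unfolding e1 e2 e3 e4 ..
    qed
    also have "(\<Sum>i<k. \<Sum>j<p. (cmod (W $$ (i,j)))^2 / (sg j)^2) \<le> (\<Sum>i<k. 1)"
      by (rule sum_mono, rule Bessel, insert k, auto)
    also have "(\<Sum>i<k. \<Sum>j<p. (cmod (V $$ (i,j)))^2) = (\<Sum>i<k. 1)"
      by (rule sum.cong, insert k rowV, auto)
    finally show ?thesis by simp
  qed
  have trk: "Re (\<Sum>i<k. R $$ (i,i)) = (\<Sum>j<p. t k j)" if k: "k \<le> p" for k
  proof -
    have "(\<Sum>i<k. R $$ (i,i)) = (\<Sum>i<k. \<Sum>j<p. W $$ (i,j) * cnj (V $$ (i,j)))"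
      by (rule sum.cong, insert k Rdec, auto)
    also have "\<dots> = (\<Sum>j<p. \<Sum>i<k. W $$ (i,j) * cnj (V $$ (i,j)))" by (rule sum.swap)
    finally show ?thesis unfolding t_def by (simp add: Re_sum)
  qed
  have sv: "singular_values R = rev (sort sgs)"
    unfolding singular_values_def A_def[symmetric] cpA proots_lin sgs_def
    by (metis mset_map sorted_list_of_multiset_mset)
  have kyfan: "Re (\<Sum>i<k. R $$ (i,i)) \<le> (\<Sum>i<k. singular_values R ! i)" if k: "k \<le> p" for k
  proof -
    have "Re (\<Sum>i<k. R $$ (i,i)) = (\<Sum>j<p. t k j)" by (rule trk[OF k])
    also have "\<dots> \<le> (\<Sum>j<p. sg j * a k j)" by (rule sum_mono, rule tle, insert k, auto)
    also have "\<dots> = (\<Sum>j<length sgs. sgs ! j * a k j)" unfolding sg_def lsg ..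
    also have "\<dots> \<le> (\<Sum>i<k. rev (sort sgs) ! i)"
    proof (rule topk)
      show "\<And>x. x \<in> set sgs \<Longrightarrow> 0 \<le> x" using sgnn lsg unfolding sg_def by (metis in_set_conv_nth)
    qed (insert a01 asum k lsg, auto)
    finally show ?thesis unfolding sv .
  qed
  have tr: "mat_trace (diagC p c * R) = (\<Sum>i<p. complex_of_real (c i) * R $$ (i,i))"
  proof -
    have "diagC p c * R = mat p p (\<lambda>(i,j). complex_of_real (c i) * R $$ (i,j))"
      unfolding diagC_def by (rule mat_diag_mult_left[OF R])
    thus ?thesis unfolding mat_trace_def by simp
  qed
  have eqr: "(\<Sum>i<p. c i * singular_values R ! i) = (\<Sum>i<p. c i * Re (R $$ (i,i)))"
  proof -
    have "(\<Sum>i<p. c i * singular_values R ! i) = Re (complex_of_real (c_norm p c R))"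
      unfolding c_norm_def by simp
    also have "\<dots> = Re (\<Sum>i<p. complex_of_real (c i) * R $$ (i,i))" using eq tr by simp
    also have "\<dots> = (\<Sum>i<p. c i * Re (R $$ (i,i)))" by (simp add: Re_sum)
    finally show ?thesis .
  qed
  define x where "x i = singular_values R ! i - Re (R $$ (i,i))" for i
  have xps: "(\<Sum>i<n. x i) \<ge> 0" if n: "n \<le> p" for n
    using kyfan[OF n] unfolding x_def by (simp add: sum_subtractf Re_sum)
  have cx0: "(\<Sum>i<p. c i * x i) = 0" unfolding x_def using eqr
    by (simp add: right_diff_distrib sum_subtractf)
  have Xp: "(\<Sum>i<p. x i) = 0"
  proof (cases "p = 0")
    case True thus ?thesis by simp
  next
    case False
    have "(\<Sum>i<p. c i * x i) \<ge> c (p - 1) * (\<Sum>i<p. x i)"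
      by (rule abel_ineq[OF cdec xps], insert False, auto)
    hence "c (p - 1) * (\<Sum>i<p. x i) \<le> 0" using cx0 by simp
    moreover have "c (p - 1) > 0" using cpos[of "p - 1"] False by simp
    ultimately have "(\<Sum>i<p. x i) \<le> 0" by (simp add: mult_le_0_iff)
    thus ?thesis using xps[of p] by simp
  qed
  have svsum: "(\<Sum>i<p. singular_values R ! i) = (\<Sum>j<p. sg j)"
  proof -
    have "mset (rev (sort sgs)) = mset sgs" by simp
    from sum_list_perm_map[OF this, of "\<lambda>x. x"]
    show ?thesis unfolding sv sg_def using lsg by simp
  qed
  have trR: "(\<Sum>j<p. t p j) = (\<Sum>j<p. sg j)"
    using Xp trk[of p] svsum unfolding x_def by (simp add: sum_subtractf Re_sum)
  have tlesg: "t p j \<le> sg j" if j: "j < p" for j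
  proof -
    have "t p j \<le> sg j * a p j" by (rule tle[OF le_refl j])
    also have "\<dots> \<le> sg j" using mult_left_le[of "a p j" "sg j"] a01[OF le_refl j] sgnn[OF j] by simp
    finally show ?thesis .
  qed
  have tsg: "t p j = sg j" if j: "j < p" for j
  proof -
    have "(\<Sum>j<p. sg j - t p j) = 0" using trR by (simp add: sum_subtractf)
    hence "\<forall>j\<in>{..<p}. sg j - t p j = 0"
      by (subst sum_nonneg_eq_0_iff[symmetric], insert tlesg, auto)
    thus ?thesis using j by simp
  qed
  have Weq: "W $$ (i,j) = complex_of_real (sg j) * V $$ (i,j)" if i: "i < p" and j: "j < p" for i j
  proof -
    have "(\<Sum>i<p. (cmod (W $$ (i,j) - complex_of_real (sg j) * V $$ (i,j)))^2)
      = (\<Sum>i<p. (cmod (W $$ (i,j)))^2 - 2 * sg j * Re (W $$ (i,j) * cnj (V $$ (i,j))) + (sg j)^2 * (cmod (V $$ (i,j)))^2)"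
      by (simp only: cmod_diff_sq)
    also have "\<dots> = (\<Sum>i<p. (cmod (W $$ (i,j)))^2) - 2 * sg j * (\<Sum>i<p. Re (W $$ (i,j) * cnj (V $$ (i,j)))) + (sg j)^2 * (\<Sum>i<p. (cmod (V $$ (i,j)))^2)"
      by (simp only: sum.distrib sum_subtractf sum_distrib_left[symmetric])
    also have "(\<Sum>i<p. Re (W $$ (i,j) * cnj (V $$ (i,j)))) = sg j" using tsg[OF j] unfolding t_def by (simp add: Re_sum)
    also have "(\<Sum>i<p. (cmod (W $$ (i,j)))^2) = (sg j)^2" using colW[OF j] by simp
    also have "(\<Sum>i<p. (cmod (V $$ (i,j)))^2) = 1" using colV[OF j] by simp
    finally have "(\<Sum>i<p. (cmod (W $$ (i,j) - complex_of_real (sg j) * V $$ (i,j)))^2) = 0"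
      by (simp add: power2_eq_square)
    hence "\<forall>i\<in>{..<p}. (cmod (W $$ (i,j) - complex_of_real (sg j) * V $$ (i,j)))^2 = 0"
      by (subst sum_nonneg_eq_0_iff[symmetric], auto)
    thus ?thesis using i by simp
  qed
  define S where "S = mat_diag p (\<lambda>j. complex_of_real (sg j))"
  have S: "S \<in> carrier_mat p p" unfolding S_def by simp
  have adjS: "mat_adjoint S = S" unfolding S_def by simp
  have WVS: "W = V * S" unfolding S_def
    by (subst mat_diag_mult_right[OF V], rule eq_matI, insert W Weq, auto simp: mult.commute)
  have VS: "V * S \<in> carrier_mat p p" using mult_carrier_mat[OF V S] .
  have RVS: "R = V * S * mat_adjoint V" using RWV WVS by simp
  have herm: "mat_adjoint R = R"
  proof -
    have "mat_adjoint R = mat_adjoint (mat_adjoint V) * mat_adjoint (V * S)"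
      unfolding RVS by (rule adj_mult[OF VS adjV])
    also have "mat_adjoint (V * S) = mat_adjoint S * mat_adjoint V" by (rule adj_mult[OF V S])
    also have "mat_adjoint (mat_adjoint V) * (mat_adjoint S * mat_adjoint V) = V * (S * mat_adjoint V)"
      using adjS by simp
    also have "\<dots> = R" unfolding RVS using assoc_mult_mat[OF V S adjV] by simp
    finally show ?thesis .
  qed
  have Sv: "S *\<^sub>v y = vec p (\<lambda>j. complex_of_real (sg j) * y $ j)" if y: "y \<in> carrier_vec p" for y
  proof (rule eq_vecI)
    fix j assume "j < dim_vec (vec p (\<lambda>j. complex_of_real (sg j) * y $ j))"
    hence j: "j < p" by simp
    have "(S *\<^sub>v y) $ j = (\<Sum>l<p. S $$ (j,l) * y $ l)"
      using S y j by (simp add: scalar_prod_def atLeast0LessThan)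
    also have "\<dots> = (\<Sum>l<p. (if l = j then complex_of_real (sg j) * y $ j else 0))"
      by (rule sum.cong, insert j, auto simp: S_def mat_diag_def)
    also have "\<dots> = complex_of_real (sg j) * y $ j" using j by simp
    finally show "(S *\<^sub>v y) $ j = vec p (\<lambda>j. complex_of_real (sg j) * y $ j) $ j" using j by simp
  qed (insert S y, auto)
  have quad: "0 \<le> Re ((R *\<^sub>v x) \<bullet>c x) \<and> Im ((R *\<^sub>v x) \<bullet>c x) = 0" if x: "x \<in> carrier_vec p" for x
  proof -
    define y where "y = mat_adjoint V *\<^sub>v x"
    have y: "y \<in> carrier_vec p" unfolding y_def using adjV x by simp
    have Sy: "S *\<^sub>v y \<in> carrier_vec p" using S y by simp
    have "R *\<^sub>v x = V *\<^sub>v (S *\<^sub>v y)"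
      unfolding RVS y_def using assoc_mult_mat_vec[OF VS adjV x] assoc_mult_mat_vec[OF V S mult_mat_vec_carrier[OF adjV x]] by simp
    hence "(R *\<^sub>v x) \<bullet>c x = (S *\<^sub>v y) \<bullet>c y"
      using adj_cscalar[OF V Sy x] unfolding y_def by simp
    also have "\<dots> = (\<Sum>j<p. complex_of_real (sg j) * y $ j * cnj (y $ j))"
      unfolding Sv[OF y] using y by (simp add: scalar_prod_def atLeast0LessThan)
    also have "\<dots> = (\<Sum>j<p. complex_of_real (sg j * (cmod (y $ j))^2))"
    proof (rule sum.cong[OF refl])
      fix j
      have "y $ j * cnj (y $ j) = complex_of_real ((cmod (y $ j))^2)" by (metis complex_norm_square)
      thus "complex_of_real (sg j) * y $ j * cnj (y $ j) = complex_of_real (sg j * (cmod (y $ j))^2)"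
        by (simp only: mult.assoc of_real_mult)
    qed
    also have "\<dots> = complex_of_real (\<Sum>j<p. sg j * (cmod (y $ j))^2)" by (simp only: of_real_sum)
    finally have "(R *\<^sub>v x) \<bullet>c x = complex_of_real (\<Sum>j<p. sg j * (cmod (y $ j))^2)" .
    moreover have "(\<Sum>j<p. sg j * (cmod (y $ j))^2) \<ge> 0" by (rule sum_nonneg, insert sgnn, auto)
    ultimately show ?thesis by simp
  qed
  show ?thesis unfolding psd_mat_def using R herm quad by blast
qed

end
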